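(* Let $a\ge2$ and $F=\breve F(a,a,a)$, with elements $x_1,\dots,x_{3a-1}$. Then, as functions on $\mathcal J(F)$, \begin{multline*} \chi_{x_a}-\chi_{x_{2a}}=\sum_{i=1}^{a}(-iT_i)-(a-1)T_{2a}+\sum_{i=1}^{a-1}(-iT_{3a-i})\\+\sum_{i=1}^{a-1}\sum_{j=0}^i aT_{\{i,2a+j\}}+\sum_{j=1}^{a-1}aT_{\{a,2a+j\}}+\sum_{i=1}^{a-1}(-aT_{\{i,2a-i,2a+i\}}). \end{multline*}
   Context: The fence $\breve F(a,a,a)$ is the poset on $\{x_1,\dots,x_{3a-1}\}$ with cover relations $x_1\lessdot x_2\lessdot\dots\lessdot x_a$, $x_a\gtrdot x_{a+1}\gtrdot\dots\gtrdot x_{2a}$, $x_{2a}\lessdot x_{2a+1}\lessdot\dots\lessdot x_{3a-1}$. $\mathcal J(F)$ is the set of order ideals. $\chi_q(I)=1$ if $q\in\max(I)$, else $0$. For an antichain $A\subseteq F$ the antichain toggleability statistic is $T_A(I)=1$ if $A\subseteq\min(F\setminus I)$, $-1$ if $A\subseteq\max(I)$, and $0$ otherwise. Notation: $T_i=T_{\{x_i\}}$, and $T_{\{i,j\}}=T_{\{x_i,x_j\}}$, $T_{\{i,j,k\}}=T_{\{x_i,x_j,x_k\}}$ (these index sets are antichains). *)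

theory Defs
  imports Main
begin

definition fence :: "nat \<Rightarrow> nat set" where
  "fence a = {1..3*a-1}"

text \<open>Cover relation: cover a i j means x_i is covered by x_j.\<close>
definition cover :: "nat \<Rightarrow> nat \<Rightarrow> nat \<Rightarrow> bool" where
  "cover a i j \<longleftrightarrow>
     (1 \<le> i \<and> i < a \<and> j = i + 1) \<or>
     (a \<le> j \<and> j < 2*a \<and> i = j + 1) \<or>
     (2*a \<le> i \<and> i < 3*a - 1 \<and> j = i + 1)"

definition fleq :: "nat \<Rightarrow> nat \<Rightarrow> nat \<Rightarrow> bool" where
  "fleq a i j \<longleftrightarrow> i \<in> fence a \<and> j \<in> fence a \<and> (cover a)\<^sup>*\<^sup>* i j"

definition ideals :: "nat \<Rightarrow> nat set set" where
  "ideals a = {I. I \<subseteq> fence a \<and> (\<forall>j\<in>I. \<forall>i. fleq a i j \<longrightarrow> i \<in> I)}"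

definition maxs :: "nat \<Rightarrow> nat set \<Rightarrow> nat set" where
  "maxs a S = {q \<in> S. \<forall>r\<in>S. fleq a q r \<longrightarrow> r = q}"

definition mins :: "nat \<Rightarrow> nat set \<Rightarrow> nat set" where
  "mins a S = {q \<in> S. \<forall>r\<in>S. fleq a r q \<longrightarrow> r = q}"

definition chi :: "nat \<Rightarrow> nat \<Rightarrow> nat set \<Rightarrow> int" where
  "chi a q I = (if q \<in> maxs a I then 1 else 0)"

definition tog :: "nat \<Rightarrow> nat set \<Rightarrow> nat set \<Rightarrow> int" where
  "tog a A I = (if A \<subseteq> mins a (fence a - I) then 1
                else if A \<subseteq> maxs a I then -1 else 0)"

end

theory Submission imports Defs begin

lemma cover_low: "cover a r k \<longleftrightarrow> (2\<le>k \<and> k\<le>a \<and> r = k-1) \<or> (a\<le>k \<and> k<2*a \<and> r=k+1) \<or> (2*a+1 \<le> k \<and> k \<le> 3*a-1 \<and> r = k-1)"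
  unfolding cover_def by auto

lemma cover_up: "cover a k r \<longleftrightarrow> (1\<le>k \<and> k<a \<and> r=k+1) \<or> (a+1\<le>k \<and> k\<le>2*a \<and> r=k-1) \<or> (2*a\<le>k \<and> k<3*a-1 \<and> r=k+1)"
  unfolding cover_def by auto

lemma low_all: "(\<forall>r. cover a r k \<longrightarrow> S r) \<longleftrightarrow> ((2\<le>k \<and> k\<le>a \<longrightarrow> S (k-1)) \<and> (a\<le>k \<and> k<2*a \<longrightarrow> S (k+1)) \<and> (2*a+1 \<le> k \<and> k \<le> 3*a-1 \<longrightarrow> S (k-1)))"
  unfolding cover_low by auto

lemma up_all: "(\<forall>r. cover a k r \<longrightarrow> S r) \<longleftrightarrow> ((1\<le>k \<and> k<a \<longrightarrow> S (k+1)) \<and> (a+1\<le>k \<and> k\<le>2*a \<longrightarrow> S (k-1)) \<and> (2*a\<le>k \<and> k<3*a-1 \<longrightarrow> S (k+1)))"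
  unfolding cover_up by auto

lemma cover_fence: "cover a i j \<Longrightarrow> i \<in> fence a \<and> j \<in> fence a"
  unfolding cover_def fence_def by auto

lemma cover_irrefl: "\<not> cover a i i"
  unfolding cover_def by auto

lemma ideal_sub: "I \<in> ideals a \<Longrightarrow> I \<subseteq> fence a"
  unfolding ideals_def by auto

lemma ideal_down: "I \<in> ideals a \<Longrightarrow> j \<in> I \<Longrightarrow> cover a i j \<Longrightarrow> i \<in> I"
  unfolding ideals_def fleq_def using cover_fence by blast

lemma maxs_ideal:
  assumes "I \<in> ideals a"
  shows "x \<in> maxs a I \<longleftrightarrow> x \<in> I \<and> (\<forall>r. cover a x r \<longrightarrow> r \<notin> I)"
proof
  assume h: "x \<in> maxs a I"
  show "x \<in> I \<and> (\<forall>r. cover a x r \<longrightarrow> r \<notin> I)"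
  proof (intro conjI allI impI)
    show "x \<in> I" using h unfolding maxs_def by auto
    fix r assume c: "cover a x r" show "r \<notin> I"
    proof
      assume "r \<in> I"
      then have "fleq a x r" using c cover_fence unfolding fleq_def by auto
      then have "r = x" using h \<open>r \<in> I\<close> unfolding maxs_def by auto
      then show False using c cover_irrefl by metis
    qed
  qed
next
  assume h: "x \<in> I \<and> (\<forall>r. cover a x r \<longrightarrow> r \<notin> I)"
  show "x \<in> maxs a I" unfolding maxs_def
  proof (safe)
    show "x \<in> I" using h by auto
    fix r assume r: "r \<in> I" "fleq a x r"
    then have rt: "(cover a)\<^sup>*\<^sup>* x r" unfolding fleq_def by auto
    show "r = x"
    proof (rule ccontr)
      assume "r \<noteq> x"
      then obtain y where y: "cover a x y" "(cover a)\<^sup>*\<^sup>* y r"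
        using rt by (metis converse_rtranclpE)
      have "fleq a y r" using y cover_fence r ideal_sub[OF assms] unfolding fleq_def by auto
      then have "y \<in> I" using r assms unfolding ideals_def by auto
      then show False using h y by auto
    qed
  qed
qed

lemma mins_ideal:
  assumes "I \<in> ideals a"
  shows "x \<in> mins a (fence a - I) \<longleftrightarrow> x \<in> fence a \<and> x \<notin> I \<and> (\<forall>r. cover a r x \<longrightarrow> r \<in> I)"
proof
  assume h: "x \<in> mins a (fence a - I)"
  show "x \<in> fence a \<and> x \<notin> I \<and> (\<forall>r. cover a r x \<longrightarrow> r \<in> I)"
  proof (intro conjI allI impI)
    show "x \<in> fence a" "x \<notin> I" using h unfolding mins_def by auto
    fix r assume c: "cover a r x" show "r \<in> I"
    proof (rule ccontr)
      assume "r \<notin> I"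
      moreover have "fleq a r x" using c cover_fence unfolding fleq_def by auto
      ultimately have "r = x" using h c cover_fence unfolding mins_def by auto
      then show False using c cover_irrefl by metis
    qed
  qed
next
  assume h: "x \<in> fence a \<and> x \<notin> I \<and> (\<forall>r. cover a r x \<longrightarrow> r \<in> I)"
  show "x \<in> mins a (fence a - I)" unfolding mins_def
  proof (safe)
    show "x \<in> fence a" "x \<in> I \<Longrightarrow> False" using h by auto
    fix r assume r: "r \<in> fence a" "r \<notin> I" "fleq a r x"
    then have rt: "(cover a)\<^sup>*\<^sup>* r x" unfolding fleq_def by auto
    show "r = x"
    proof (rule ccontr)
      assume "r \<noteq> x"
      then obtain y where y: "(cover a)\<^sup>*\<^sup>* r y" "cover a y x"
        using rt by (metis rtranclp.cases)
      have "y \<in> I" using h y by auto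
      moreover have "fleq a r y" using y cover_fence r unfolding fleq_def by auto
      ultimately have "r \<in> I" using assms unfolding ideals_def by auto
      then show False using r by auto
    qed
  qed
qed

lemma down_from:
  assumes step: "\<And>i. 1 \<le> i \<Longrightarrow> i < m \<Longrightarrow> P (Suc i) \<Longrightarrow> P i" and top: "P m"
  shows "1 \<le> i \<Longrightarrow> i \<le> m \<Longrightarrow> P i"
proof (induction "m - i" arbitrary: i)
  case 0 then have "i = m" by auto
  then show ?case using top by simp
next
  case (Suc d)
  then have "P (Suc i)" by auto
  then show ?case using step Suc.prems Suc.hyps by auto
qed

lemma prefix:
  assumes "\<And>i. 1 \<le> i \<Longrightarrow> i < n \<Longrightarrow> P (Suc i) \<Longrightarrow> P i"
  shows "\<exists>p\<le>n. \<forall>i. 1 \<le> i \<and> i \<le> n \<longrightarrow> (P i \<longleftrightarrow> i \<le> p)"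
  using assms
proof (induction n)
  case 0 then show ?case by auto
next
  case (Suc n)
  then obtain p where p: "p \<le> n" "\<forall>i. 1 \<le> i \<and> i \<le> n \<longrightarrow> (P i \<longleftrightarrow> i \<le> p)" by auto
  show ?case
  proof (cases "P (Suc n)")
    case True
    have "P i" if "1 \<le> i" "i \<le> Suc n" for i
      using down_from[of "Suc n" P i] Suc.prems True that by blast
    then show ?thesis by (intro exI[of _ "Suc n"]) auto
  next
    case False
    then show ?thesis using p by (intro exI[of _ p]) (auto simp: le_Suc_eq)
  qed
qed


definition memf :: "nat \<Rightarrow> nat \<Rightarrow> nat \<Rightarrow> nat \<Rightarrow> bool \<Rightarrow> nat \<Rightarrow> bool" where
  "memf a p q r b k \<longleftrightarrow> (1 \<le> k \<and> k \<le> p) \<or> (k = a \<and> b) \<or> (2*a+1-q \<le> k \<and> k \<le> 2*a) \<or> (2*a < k \<and> k \<le> 2*a+r)"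

lemma param:
  assumes a2: "a \<ge> 2" and I: "I \<in> ideals a"
  shows "\<exists>p q r b. p \<le> a-1 \<and> q \<le> a \<and> r \<le> a-1 \<and> (b \<longrightarrow> p = a-1 \<and> q = a) \<and> (1 \<le> r \<longrightarrow> 1 \<le> q)
     \<and> (\<forall>k. k \<in> I \<longleftrightarrow> memf a p q r b k)"
proof -
  obtain p where p: "p \<le> a-1" "\<forall>i. 1 \<le> i \<and> i \<le> a-1 \<longrightarrow> (i \<in> I \<longleftrightarrow> i \<le> p)"
  proof -
    have "\<exists>p\<le>a-1. \<forall>i. 1 \<le> i \<and> i \<le> a-1 \<longrightarrow> (i \<in> I \<longleftrightarrow> i \<le> p)"
    proof (rule prefix)
      fix i assume "1 \<le> i" "i < a-1" "Suc i \<in> I"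
      moreover have "cover a i (Suc i)" using \<open>1 \<le> i\<close> \<open>i < a-1\<close> unfolding cover_def by auto
      ultimately show "i \<in> I" using ideal_down[OF I] by blast
    qed
    then show ?thesis using that by blast
  qed
  obtain q where q: "q \<le> a" "\<forall>m. 1 \<le> m \<and> m \<le> a \<longrightarrow> ((2*a+1-m) \<in> I \<longleftrightarrow> m \<le> q)"
  proof -
    have "\<exists>q\<le>a. \<forall>m. 1 \<le> m \<and> m \<le> a \<longrightarrow> ((2*a+1-m) \<in> I \<longleftrightarrow> m \<le> q)"
    proof (rule prefix)
      fix m assume m: "1 \<le> m" "m < a" "(2*a+1-Suc m) \<in> I"
      moreover have "cover a (2*a+1-m) (2*a+1-Suc m)" using m unfolding cover_def by auto
      ultimately show "(2*a+1-m) \<in> I" using ideal_down[OF I] by blast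
    qed
    then show ?thesis using that by blast
  qed
  obtain r where r: "r \<le> a-1" "\<forall>m. 1 \<le> m \<and> m \<le> a-1 \<longrightarrow> ((2*a+m) \<in> I \<longleftrightarrow> m \<le> r)"
  proof -
    have "\<exists>r\<le>a-1. \<forall>m. 1 \<le> m \<and> m \<le> a-1 \<longrightarrow> ((2*a+m) \<in> I \<longleftrightarrow> m \<le> r)"
    proof (rule prefix)
      fix m assume m: "1 \<le> m" "m < a-1" "(2*a+Suc m) \<in> I"
      moreover have "cover a (2*a+m) (2*a+Suc m)" using m unfolding cover_def by auto
      ultimately show "(2*a+m) \<in> I" using ideal_down[OF I] by blast
    qed
    then show ?thesis using that by blast
  qed
  define b where "b = (a \<in> I)"
  have bp: "b \<longrightarrow> p = a-1 \<and> q = a"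
  proof
    assume "b"
    then have aI: "a \<in> I" unfolding b_def .
    have "cover a (a-1) a" using a2 unfolding cover_def by auto
    then have "a-1 \<in> I" using ideal_down[OF I aI] by blast
    then have "a-1 \<le> p" using p(2) a2 by auto
    moreover have "cover a (a+1) a" using a2 unfolding cover_def by auto
    then have "a+1 \<in> I" using ideal_down[OF I aI] by blast
    then have "a \<le> q" using q(2)[rule_format, of a] a2 by auto
    ultimately show "p = a-1 \<and> q = a" using p(1) q(1) by auto
  qed
  have rq: "1 \<le> r \<longrightarrow> 1 \<le> q"
  proof
    assume "1 \<le> r"
    then have "2*a+1 \<in> I" using r(2)[rule_format, of 1] r(1) by auto
    moreover have "cover a (2*a) (2*a+1)" using a2 unfolding cover_def by auto
    ultimately have "2*a \<in> I" using ideal_down[OF I] by blast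
    then show "1 \<le> q" using q(2)[rule_format, of 1] a2 by auto
  qed
  have mem: "k \<in> I \<longleftrightarrow> memf a p q r b k" for k
  proof (cases "1 \<le> k \<and> k \<le> 3*a-1")
    case False
    then have "k \<notin> I" using ideal_sub[OF I] unfolding fence_def by auto
    moreover have "\<not> memf a p q r b k" using False p(1) q(1) r(1) a2 unfolding memf_def by auto
    ultimately show ?thesis by simp
  next
    case True
    consider "k < a" | "k = a" | "a < k \<and> k \<le> 2*a" | "2*a < k" by linarith
    then show ?thesis
    proof cases
      case 1 then show ?thesis using p(2)[rule_format, of k] True q(1) unfolding memf_def by auto
    next
      case 2 then show ?thesis using p(1) q(1) a2 unfolding memf_def b_def by auto
    next
      case 3
      have "1 \<le> 2*a+1-k \<and> 2*a+1-k \<le> a" using 3 by auto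
      then have "(2*a+1-(2*a+1-k)) \<in> I \<longleftrightarrow> (2*a+1-k) \<le> q" using q(2) by blast
      moreover have "2*a+1-(2*a+1-k) = k" using 3 by auto
      ultimately show ?thesis using 3 p(1) unfolding memf_def by auto
    next
      case 4
      have "1 \<le> k-2*a \<and> k-2*a \<le> a-1" using 4 True by auto
      then have "(2*a+(k-2*a)) \<in> I \<longleftrightarrow> (k-2*a) \<le> r" using r(2) by blast
      then show ?thesis using 4 p(1) unfolding memf_def by auto
    qed
  qed
  show ?thesis using p(1) q(1) r(1) bp rq mem by blast
qed



lemma memf_left: "1 \<le> k \<Longrightarrow> k \<le> a-1 \<Longrightarrow> q \<le> a \<Longrightarrow> memf a p q r b k \<longleftrightarrow> k \<le> p"
  unfolding memf_def by auto
lemma memf_0: "a \<ge> 1 \<Longrightarrow> q \<le> a \<Longrightarrow> memf a p q r b 0 \<longleftrightarrow> False"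
  unfolding memf_def by auto
lemma memf_a: "a \<ge> 1 \<Longrightarrow> p \<le> a-1 \<Longrightarrow> q \<le> a \<Longrightarrow> memf a p q r b a \<longleftrightarrow> b"
  unfolding memf_def by auto
lemma memf_mid: "1 \<le> m \<Longrightarrow> m \<le> a \<Longrightarrow> p \<le> a-1 \<Longrightarrow> memf a p q r b (2*a+1-m) \<longleftrightarrow> m \<le> q"
  unfolding memf_def by auto
lemma memf_right: "1 \<le> j \<Longrightarrow> p \<le> a-1 \<Longrightarrow> memf a p q r b (2*a+j) \<longleftrightarrow> j \<le> r"
  unfolding memf_def by auto

context
  fixes a :: nat and I :: "nat set" and p q r :: nat and b :: bool
  assumes a2: "a \<ge> 2" and I: "I \<in> ideals a" and pa: "p \<le> a-1" and qa: "q \<le> a" and ra: "r \<le> a-1"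
    and bpq: "b \<longrightarrow> p = a-1 \<and> q = a" and rq: "1 \<le> r \<longrightarrow> 1 \<le> q"
    and mem: "\<And>k. k \<in> I \<longleftrightarrow> memf a p q r b k"
begin

definition "mn x \<longleftrightarrow> x \<in> mins a (fence a - I)"
definition "mx x \<longleftrightarrow> x \<in> maxs a I"

lemma mn_eq: "mn x \<longleftrightarrow> x \<in> fence a \<and> \<not> memf a p q r b x \<and>
   ((2\<le>x \<and> x\<le>a \<longrightarrow> memf a p q r b (x-1)) \<and> (a\<le>x \<and> x<2*a \<longrightarrow> memf a p q r b (x+1)) \<and> (2*a+1 \<le> x \<and> x \<le> 3*a-1 \<longrightarrow> memf a p q r b (x-1)))"
  unfolding mn_def mins_ideal[OF I] mem low_all ..

lemma mx_eq: "mx x \<longleftrightarrow> memf a p q r b x \<and>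
   ((1\<le>x \<and> x<a \<longrightarrow> \<not> memf a p q r b (x+1)) \<and> (a+1\<le>x \<and> x\<le>2*a \<longrightarrow> \<not> memf a p q r b (x-1)) \<and> (2*a\<le>x \<and> x<3*a-1 \<longrightarrow> \<not> memf a p q r b (x+1)))"
  unfolding mx_def maxs_ideal[OF I] mem up_all ..

lemma fence_in: "1 \<le> x \<Longrightarrow> x \<le> 3*a-1 \<Longrightarrow> x \<in> fence a"
  unfolding fence_def by auto

lemma mn_left: assumes i: "1 \<le> i" "i \<le> a-1" shows "mn i \<longleftrightarrow> i = p+1"
proof -
  have f: "i \<in> fence a" using i a2 by (intro fence_in) auto
  have m0: "memf a p q r b i \<longleftrightarrow> i \<le> p" using memf_left[of i a q p r b] i qa by auto
  have m1: "2 \<le> i \<Longrightarrow> memf a p q r b (i-1) \<longleftrightarrow> i-1 \<le> p" using memf_left[of "i-1" a q p r b] i qa by auto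
  have c: "\<not> (a \<le> i)" "\<not> (2*a+1 \<le> i)" using i a2 by auto
  show ?thesis unfolding mn_eq using f m0 m1 c i by auto
qed

lemma mx_left: assumes i: "1 \<le> i" "i \<le> a-1" shows "mx i \<longleftrightarrow> i = p \<and> \<not> b"
proof -
  have m0: "memf a p q r b i \<longleftrightarrow> i \<le> p" using memf_left[of i a q p r b] i qa by auto
  have m1: "i+1 \<le> a-1 \<Longrightarrow> memf a p q r b (i+1) \<longleftrightarrow> i+1 \<le> p" using memf_left[of "i+1" a q p r b] i qa by auto
  have m2: "i+1 = a \<Longrightarrow> memf a p q r b (i+1) \<longleftrightarrow> b" using memf_a[of a p q r b] a2 pa qa by auto
  have c: "i < a" "\<not> (a+1 \<le> i)" "\<not> (2*a \<le> i)" using i a2 by auto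
  have "i+1 \<le> a-1 \<or> i+1 = a" using i by auto
  then show ?thesis unfolding mx_eq using m0 m1 m2 c i pa bpq by auto
qed

lemma mn_a: "mn a \<longleftrightarrow> \<not> b \<and> p = a-1 \<and> q = a"
proof -
  have f: "a \<in> fence a" using a2 by (intro fence_in) auto
  have m0: "memf a p q r b a \<longleftrightarrow> b" using memf_a[of a p q r b] a2 pa qa by auto
  have m1: "memf a p q r b (a-1) \<longleftrightarrow> a-1 \<le> p" using memf_left[of "a-1" a q p r b] a2 qa by auto
  have m2: "memf a p q r b (a+1) \<longleftrightarrow> a \<le> q" using memf_mid[of a a p q r b] a2 pa by (simp add: mult_2)
  have c: "2 \<le> a" "a < 2*a" "\<not> (2*a+1 \<le> a)" using a2 by auto
  show ?thesis unfolding mn_eq using f m0 m1 m2 c pa qa by auto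
qed

lemma mx_a: "mx a \<longleftrightarrow> b"
proof -
  have m0: "memf a p q r b a \<longleftrightarrow> b" using memf_a[of a p q r b] a2 pa qa by auto
  have c: "\<not> a < a" "\<not> (a+1 \<le> a)" "\<not> (2*a \<le> a)" using a2 by auto
  show ?thesis unfolding mx_eq using m0 c by auto
qed

lemma memf_2a: "memf a p q r b (2*a) \<longleftrightarrow> 1 \<le> q"
  using memf_mid[of 1 a p q r b] a2 pa by simp

lemma mn_r: assumes j: "j \<le> a-1" shows "mn (2*a+j) \<longleftrightarrow> (if j = 0 then q = 0 else j = r+1 \<and> 1 \<le> q)"
proof -
  have f: "2*a+j \<in> fence a" using j a2 by (intro fence_in) auto
  show ?thesis
  proof (cases "j = 0")
    case True
    have c: "\<not> (2*a \<le> a)" "\<not> (2*a < 2*a)" "\<not> (2*a+1 \<le> 2*a)" using a2 by auto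
    show ?thesis unfolding mn_eq using True f c memf_2a by auto
  next
    case False
    have m0: "memf a p q r b (2*a+j) \<longleftrightarrow> j \<le> r" using memf_right[of j p a q r b] False pa by auto
    have m1: "j = 1 \<Longrightarrow> memf a p q r b (2*a+j-1) \<longleftrightarrow> 1 \<le> q" using memf_2a by auto
    have m2: "2 \<le> j \<Longrightarrow> memf a p q r b (2*a+j-1) \<longleftrightarrow> j-1 \<le> r"
      using memf_right[of "j-1" p a q r b] pa by (simp add: add_diff_assoc)
    have c: "\<not> (2*a+j \<le> a)" "\<not> (2*a+j < 2*a)" "2*a+1 \<le> 2*a+j" "2*a+j \<le> 3*a-1" using a2 j False by auto
    have "j = 1 \<or> 2 \<le> j" using False by auto
    then show ?thesis unfolding mn_eq using False f c m0 m1 m2 rq by auto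
  qed
qed

lemma mx_r: assumes j: "j \<le> a-1" shows "mx (2*a+j) \<longleftrightarrow> j = r \<and> (j = 0 \<longrightarrow> q = 1)"
proof (cases "j = 0")
  case True
  have m1: "memf a p q r b (2*a-1) \<longleftrightarrow> 2 \<le> q" using memf_mid[of 2 a p q r b] a2 pa by simp
  have m2: "memf a p q r b (2*a+1) \<longleftrightarrow> 1 \<le> r" using memf_right[of 1 p a q r b] pa by simp
  have c: "\<not> (1 \<le> 2*a \<and> 2*a < a)" "a+1 \<le> 2*a" "2*a < 3*a-1" using a2 by auto
  show ?thesis unfolding mx_eq using True c memf_2a m1 m2 by auto
next
  case False
  have m0: "memf a p q r b (2*a+j) \<longleftrightarrow> j \<le> r" using memf_right[of j p a q r b] False pa by auto
  have m1: "memf a p q r b (2*a+j+1) \<longleftrightarrow> j+1 \<le> r" using memf_right[of "j+1" p a q r b] pa by simp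
  have c: "\<not> (2*a+j < a)" "\<not> (a+1 \<le> 2*a+j \<and> 2*a+j \<le> 2*a)" using a2 j False by auto
  have "2*a+j < 3*a-1 \<or> j = a-1" using j a2 by auto
  then show ?thesis unfolding mx_eq using False c m0 m1 ra by auto
qed

lemma mn_m: assumes i: "1 \<le> i" "i \<le> a-1" shows "mn (2*a-i) \<longleftrightarrow> q = i"
proof -
  have f: "2*a-i \<in> fence a" using i a2 by (intro fence_in) auto
  have m0: "memf a p q r b (2*a-i) \<longleftrightarrow> i+1 \<le> q" using memf_mid[of "i+1" a p q r b] i a2 pa by simp
  have e: "2*a-i+1 = 2*a+1-i" using i a2 by auto
  have m1: "memf a p q r b (2*a-i+1) \<longleftrightarrow> i \<le> q" unfolding e using memf_mid[of i a p q r b] i a2 pa by simp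
  have c: "\<not> (2*a-i \<le> a)" "a \<le> 2*a-i" "2*a-i < 2*a" "\<not> (2*a+1 \<le> 2*a-i)" using i a2 by auto
  show ?thesis unfolding mn_eq using f m0 m1 c by auto
qed

lemma mx_m: assumes i: "1 \<le> i" "i \<le> a-1" shows "mx (2*a-i) \<longleftrightarrow> q = i+1 \<and> (i = a-1 \<longrightarrow> \<not> b)"
proof -
  have m0: "memf a p q r b (2*a-i) \<longleftrightarrow> i+1 \<le> q" using memf_mid[of "i+1" a p q r b] i a2 pa by simp
  have m1: "i+1 \<le> a-1 \<Longrightarrow> memf a p q r b (2*a-i-1) \<longleftrightarrow> i+2 \<le> q" using memf_mid[of "i+2" a p q r b] i a2 pa by simp
  have m2: "i = a-1 \<Longrightarrow> memf a p q r b (2*a-i-1) \<longleftrightarrow> b" using memf_a[of a p q r b] i a2 pa qa by simp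
  have c: "\<not> (2*a-i < a)" "a+1 \<le> 2*a-i" "2*a-i \<le> 2*a" "\<not> (2*a \<le> 2*a-i)" using i a2 by auto
  have "i+1 \<le> a-1 \<or> i = a-1" using i by auto
  then show ?thesis unfolding mx_eq using m0 m1 m2 c qa by auto
qed


lemma tog1: "tog a {x} I = (if mn x then 1 else if mx x then -1 else 0)"
  unfolding tog_def mn_def mx_def by simp
lemma tog2: "tog a {x,y} I = (if mn x \<and> mn y then 1 else if mx x \<and> mx y then -1 else 0)"
  unfolding tog_def mn_def mx_def by simp
lemma tog3: "tog a {x,y,z} I = (if mn x \<and> mn y \<and> mn z then 1 else if mx x \<and> mx y \<and> mx z then -1 else 0)"
  unfolding tog_def mn_def mx_def by simp
lemma mn_mx: "mn x \<Longrightarrow> \<not> mx x"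
  unfolding mn_def mx_def mins_def maxs_def by auto

lemma S1: "(\<Sum>i=1..a. - int i * tog a {i} I) =
   (if p+1 \<in> {1..a-1} then - int (p+1) else 0) + (if p \<in> {1..a-1} then (if b then 0 else int p) else 0)
   + (if \<not> b \<and> p = a-1 \<and> q = a then - int a else 0) + (if b then int a else 0)"
proof -
  have e: "{1..a} = insert a {1..a-1}" using a2 by auto
  have "(\<Sum>i=1..a-1. - int i * tog a {i} I) = (\<Sum>i=1..a-1. (if i = p+1 then - int i else 0) + (if i = p then (if b then 0 else int i) else 0))"
    by (rule sum.cong) (auto simp: tog1 mn_left mx_left)
  also have "\<dots> = (if p+1 \<in> {1..a-1} then - int (p+1) else 0) + (if p \<in> {1..a-1} then (if b then 0 else int p) else 0)"
    by (simp only: sum.distrib sum.delta finite_atLeastAtMost)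
  finally have A: "(\<Sum>i=1..a-1. - int i * tog a {i} I) = \<dots>" .
  have B: "- int a * tog a {a} I = (if \<not> b \<and> p = a-1 \<and> q = a then - int a else 0) + (if b then int a else 0)"
    by (auto simp: tog1 mn_a mx_a)
  have C: "(\<Sum>i\<in>insert a {1..a-1}. - int i * tog a {i} I) = - int a * tog a {a} I + (\<Sum>i=1..a-1. - int i * tog a {i} I)"
    by (rule sum.insert) auto
  show ?thesis unfolding e C A B by linarith
qed


lemma S2: "tog a {2*a} I = (if q = 0 then 1 else if q = 1 \<and> r = 0 then -1 else 0)"
  using mn_r[of 0] mx_r[of 0] by (auto simp: tog1)

lemma chiA: "chi a a I = (if b then 1 else 0)"
  using mx_a unfolding chi_def mx_def by auto
lemma chi2A: "chi a (2*a) I = (if q = 1 \<and> r = 0 then 1 else 0)"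
  using mx_r[of 0] unfolding chi_def mx_def by auto

lemma S3: "(\<Sum>i=1..a-1. - int i * tog a {3*a - i} I) =
   (if a-r-1 \<in> {1..a-1} then (if 1 \<le> q then - int (a-r-1) else 0) else 0) + (if a-r \<in> {1..a-1} then int (a-r) else 0)"
proof -
  have "(\<Sum>i=1..a-1. - int i * tog a {3*a - i} I) = (\<Sum>i=1..a-1. (if i = a-r-1 then (if 1 \<le> q then - int i else 0) else 0) + (if i = a-r then int i else 0))"
  proof (rule sum.cong)
    fix i assume i: "i \<in> {1..a-1}"
    have e: "3*a - i = 2*a + (a-i)" using i by auto
    have j: "a - i \<le> a-1" using i by auto
    have "(a - i = r+1) = (i = a-r-1)" "(a-i = r) = (i = a-r)" using i ra by auto
    moreover have "a - i \<noteq> 0" using i by auto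
    ultimately show "- int i * tog a {3*a - i} I = (if i = a-r-1 then (if 1 \<le> q then - int i else 0) else 0) + (if i = a-r then int i else 0)"
      unfolding e tog1 mn_r[OF j] mx_r[OF j] using i by auto
  qed simp
  also have "\<dots> = (if a-r-1 \<in> {1..a-1} then (if 1 \<le> q then - int (a-r-1) else 0) else 0) + (if a-r \<in> {1..a-1} then int (a-r) else 0)"
    by (simp only: sum.distrib sum.delta finite_atLeastAtMost)
  finally show ?thesis .
qed

lemma S5: "(\<Sum>j=1..a-1. int a * tog a {a, 2*a + j} I) =
   (if r+1 \<in> {1..a-1} then (if \<not> b \<and> p = a-1 \<and> q = a then int a else 0) else 0) + (if r \<in> {1..a-1} then (if b then - int a else 0) else 0)"
proof -
  have "(\<Sum>j=1..a-1. int a * tog a {a, 2*a + j} I) = (\<Sum>j=1..a-1. (if j = r+1 then (if \<not> b \<and> p = a-1 \<and> q = a then int a else 0) else 0) + (if j = r then (if b then - int a else 0) else 0))"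
  proof (rule sum.cong)
    fix j assume j: "j \<in> {1..a-1}"
    then have j': "j \<le> a-1" "j \<noteq> 0" by auto
    show "int a * tog a {a, 2*a + j} I = (if j = r+1 then (if \<not> b \<and> p = a-1 \<and> q = a then int a else 0) else 0) + (if j = r then (if b then - int a else 0) else 0)"
      unfolding tog2 mn_r[OF j'(1)] mx_r[OF j'(1)] mn_a mx_a using j' a2 by auto
  qed simp
  also have "\<dots> = (if r+1 \<in> {1..a-1} then (if \<not> b \<and> p = a-1 \<and> q = a then int a else 0) else 0) + (if r \<in> {1..a-1} then (if b then - int a else 0) else 0)"
    by (simp only: sum.distrib sum.delta finite_atLeastAtMost)
  finally show ?thesis .
qed

lemma S6: "(\<Sum>i=1..a-1. - int a * tog a {i, 2*a - i, 2*a + i} I) =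
   (if p+1 \<in> {1..a-1} then (if q = p+1 \<and> p+1 = r+1 then - int a else 0) else 0) + (if p \<in> {1..a-1} then (if \<not> b \<and> q = p+1 \<and> p = r then int a else 0) else 0)"
proof -
  have "(\<Sum>i=1..a-1. - int a * tog a {i, 2*a - i, 2*a + i} I) = (\<Sum>i=1..a-1. (if i = p+1 then (if q = i \<and> i = r+1 then - int a else 0) else 0) + (if i = p then (if \<not> b \<and> q = i+1 \<and> i = r then int a else 0) else 0))"
  proof (rule sum.cong)
    fix i assume i: "i \<in> {1..a-1}"
    then have i': "1 \<le> i" "i \<le> a-1" "i \<noteq> 0" by auto
    show "- int a * tog a {i, 2*a - i, 2*a + i} I = (if i = p+1 then (if q = i \<and> i = r+1 then - int a else 0) else 0) + (if i = p then (if \<not> b \<and> q = i+1 \<and> i = r then int a else 0) else 0)"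
      unfolding tog3 mn_r[OF i'(2)] mx_r[OF i'(2)] mn_m[OF i'(1,2)] mx_m[OF i'(1,2)] mn_left[OF i'(1,2)] mx_left[OF i'(1,2)] using i' a2 by auto
  qed simp
  also have "\<dots> = (if p+1 \<in> {1..a-1} then (if q = p+1 \<and> p+1 = r+1 then - int a else 0) else 0) + (if p \<in> {1..a-1} then (if \<not> b \<and> q = p+1 \<and> p = r then int a else 0) else 0)"
    by (simp only: sum.distrib sum.delta finite_atLeastAtMost)
  finally show ?thesis .
qed


lemma S4i: assumes i: "1 \<le> i" "i \<le> a-1"
  shows "(\<Sum>j=0..i. int a * tog a {i, 2*a + j} I) =
    (if i = p+1 then (if q = 0 then int a else 0) + (if r+1 \<le> i \<and> 1 \<le> q then int a else 0) else 0)
  + (if i = p then (if \<not> b then (if q = 1 \<and> r = 0 then - int a else 0) + (if r \<le> i \<and> 1 \<le> r then - int a else 0) else 0) else 0)"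
proof -
  have "(\<Sum>j=0..i. int a * tog a {i, 2*a + j} I) = (\<Sum>j=0..i.
      (if j = 0 then (if mn i \<and> q = 0 then int a else if mx i \<and> q = 1 \<and> r = 0 then - int a else 0) else 0)
    + (if j = r+1 then (if mn i \<and> 1 \<le> q then int a else 0) else 0)
    + (if j = r then (if mx i \<and> 1 \<le> r then - int a else 0) else 0))"
  proof (rule sum.cong)
    fix j assume j: "j \<in> {0..i}"
    then have j': "j \<le> a-1" using i by auto
    show "int a * tog a {i, 2*a + j} I = (if j = 0 then (if mn i \<and> q = 0 then int a else if mx i \<and> q = 1 \<and> r = 0 then - int a else 0) else 0)
    + (if j = r+1 then (if mn i \<and> 1 \<le> q then int a else 0) else 0)
    + (if j = r then (if mx i \<and> 1 \<le> r then - int a else 0) else 0)"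
      unfolding tog2 mn_r[OF j'] mx_r[OF j'] using mn_mx[of i] by auto
  qed simp
  also have "\<dots> = (if 0 \<in> {0..i} then (if mn i \<and> q = 0 then int a else if mx i \<and> q = 1 \<and> r = 0 then - int a else 0) else 0)
    + (if r+1 \<in> {0..i} then (if mn i \<and> 1 \<le> q then int a else 0) else 0)
    + (if r \<in> {0..i} then (if mx i \<and> 1 \<le> r then - int a else 0) else 0)"
    by (simp only: sum.distrib sum.delta finite_atLeastAtMost)
  also have "\<dots> = (if i = p+1 then (if q = 0 then int a else 0) + (if r+1 \<le> i \<and> 1 \<le> q then int a else 0) else 0)
  + (if i = p then (if \<not> b then (if q = 1 \<and> r = 0 then - int a else 0) + (if r \<le> i \<and> 1 \<le> r then - int a else 0) else 0) else 0)"
    unfolding mn_left[OF i] mx_left[OF i] by auto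
  finally show ?thesis .
qed

lemma S4: "(\<Sum>i=1..a-1. \<Sum>j=0..i. int a * tog a {i, 2*a + j} I) =
    (if p+1 \<in> {1..a-1} then (if q = 0 then int a else 0) + (if r+1 \<le> p+1 \<and> 1 \<le> q then int a else 0) else 0)
  + (if p \<in> {1..a-1} then (if \<not> b then (if q = 1 \<and> r = 0 then - int a else 0) + (if r \<le> p \<and> 1 \<le> r then - int a else 0) else 0) else 0)"
proof -
  have "(\<Sum>i=1..a-1. \<Sum>j=0..i. int a * tog a {i, 2*a + j} I) = (\<Sum>i=1..a-1.
    (if i = p+1 then (if q = 0 then int a else 0) + (if r+1 \<le> i \<and> 1 \<le> q then int a else 0) else 0)
  + (if i = p then (if \<not> b then (if q = 1 \<and> r = 0 then - int a else 0) + (if r \<le> i \<and> 1 \<le> r then - int a else 0) else 0) else 0))"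
    by (rule sum.cong[OF refl], rule S4i) auto
  also have "\<dots> = (if p+1 \<in> {1..a-1} then (if q = 0 then int a else 0) + (if r+1 \<le> p+1 \<and> 1 \<le> q then int a else 0) else 0)
  + (if p \<in> {1..a-1} then (if \<not> b then (if q = 1 \<and> r = 0 then - int a else 0) + (if r \<le> p \<and> 1 \<le> r then - int a else 0) else 0) else 0)"
    by (simp only: sum.distrib sum.delta finite_atLeastAtMost)
  finally show ?thesis .
qed

end


lemma arith_final:
  fixes a p q r :: nat and b :: bool
  assumes a2: "a \<ge> 2" and pa: "p \<le> a-1" and qa: "q \<le> a" and ra: "r \<le> a-1" and bpq: "b \<longrightarrow> p = a-1 \<and> q = a" and rq: "1 \<le> r \<longrightarrow> 1 \<le> q"
  shows "(if b then 1 else 0) - (if q = 1 \<and> r = 0 then 1 else 0) =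
   ((if p+1 \<in> {1..a-1} then - int (p+1) else 0) + (if p \<in> {1..a-1} then (if b then 0 else int p) else 0)
   + (if \<not> b \<and> p = a-1 \<and> q = a then - int a else 0) + (if b then int a else 0))
   - (int a - 1) * (if q = 0 then 1 else if q = 1 \<and> r = 0 then -1 else 0)
   + ((if a-r-1 \<in> {1..a-1} then (if 1 \<le> q then - int (a-r-1) else 0) else 0) + (if a-r \<in> {1..a-1} then int (a-r) else 0))
   + ((if p+1 \<in> {1..a-1} then (if q = 0 then int a else 0) + (if r+1 \<le> p+1 \<and> 1 \<le> q then int a else 0) else 0)
  + (if p \<in> {1..a-1} then (if \<not> b then (if q = 1 \<and> r = 0 then - int a else 0) + (if r \<le> p \<and> 1 \<le> r then - int a else 0) else 0) else 0))
   + ((if r+1 \<in> {1..a-1} then (if \<not> b \<and> p = a-1 \<and> q = a then int a else 0) else 0) + (if r \<in> {1..a-1} then (if b then - int a else 0) else 0))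
   + ((if p+1 \<in> {1..a-1} then (if q = p+1 \<and> p+1 = r+1 then - int a else 0) else 0) + (if p \<in> {1..a-1} then (if \<not> b \<and> q = p+1 \<and> p = r then int a else 0) else 0))"
proof -
  have e: "(int a - 1) * (if q = 0 then 1 else if q = 1 \<and> r = 0 then -1 else 0) = (if q = 0 then int a - 1 else if q = 1 \<and> r = 0 then 1 - int a else 0)" by simp
  have m1: "p+1 \<in> {1..a-1} \<longleftrightarrow> p+2 \<le> a" using a2 by auto
  have m2: "p \<in> {1..a-1} \<longleftrightarrow> 1 \<le> p" using pa by auto
  have m5: "r+1 \<in> {1..a-1} \<longleftrightarrow> r+2 \<le> a" using a2 by auto
  have m6: "r \<in> {1..a-1} \<longleftrightarrow> 1 \<le> r" using ra by auto
  have m9: "p = a-1 \<longleftrightarrow> p+1 = a" using a2 by auto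
  have m3: "(if a-r-1 \<in> {1..a-1} then (if 1 \<le> q then - int (a-r-1) else 0) else 0) = (if r+2 \<le> a then (if 1 \<le> q then - (int a - int r - 1) else 0) else 0)"
    using ra a2 by (auto simp: of_nat_diff)
  have m4: "(if a-r \<in> {1..a-1} then int (a-r) else 0) = (if 1 \<le> r then int a - int r else 0)"
    using ra a2 by (auto simp: of_nat_diff)
  have pa': "p+1 \<le> a" and ra': "r+1 \<le> a" and bpq': "b \<longrightarrow> p+1 = a \<and> q = a" using pa ra bpq a2 by auto
  show ?thesis unfolding e m1 m2 m3 m4 m5 m6 m9 using a2 pa' qa ra' bpq' rq by (cases b; cases "q = 0"; auto split: if_split)
qed

theorem theorem5p8:
  fixes a :: nat and I :: "nat set"
  assumes "a \<ge> 2" and "I \<in> ideals a"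
  shows "chi a a I - chi a (2*a) I =
      (\<Sum>i=1..a. - int i * tog a {i} I)
    - (int a - 1) * tog a {2*a} I
    + (\<Sum>i=1..a-1. - int i * tog a {3*a - i} I)
    + (\<Sum>i=1..a-1. \<Sum>j=0..i. int a * tog a {i, 2*a + j} I)
    + (\<Sum>j=1..a-1. int a * tog a {a, 2*a + j} I)
    + (\<Sum>i=1..a-1. - int a * tog a {i, 2*a - i, 2*a + i} I)"
proof -
  obtain p q r b where pa: "p \<le> a-1" and qa: "q \<le> a" and ra: "r \<le> a-1" and bpq: "b \<longrightarrow> p = a-1 \<and> q = a"
    and rq: "1 \<le> r \<longrightarrow> 1 \<le> q" and mem: "\<forall>k. k \<in> I \<longleftrightarrow> memf a p q r b k"
    using param[OF assms] by blast
  note H = assms pa qa ra bpq rq mem[rule_format]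
  show ?thesis
    unfolding chiA[OF H] chi2A[OF H] S1[OF H] S2[OF H] S3[OF H] S4[OF H] S5[OF H] S6[OF H]
    using arith_final[OF assms(1) pa qa ra bpq rq] by linarith
qed

end
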